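(* The class of weakly right coherent monoids is closed under retracts: if $S$ is a weakly right coherent monoid and $T$ is a monoid that is a retract of $S$, then $T$ is weakly right coherent.
   Context: A monoid $M$ is weakly right coherent if every finitely generated right ideal of $M$ is finitely presented as a right $M$-act (known to be equivalent to $M$ being right ideal Howson and finitely right equated: the intersection of any two finitely generated right ideals is finitely generated, and every $\mathbf{r}_M(a)=\{(s,t)\mid as=at\}$ is finitely generated as a right congruence). A retract of a semigroup $S$ is a subsemigroup $T$ for which there is a homomorphism $\phi:S\to T$ with $t\phi=t$ for all $t\in T$. *)

theory Defs
  imports "HOL-Algebra.Group"
begin

definition right_ideal :: "'a monoid \<Rightarrow> 'a set \<Rightarrow> bool" where
  "right_ideal M I \<longleftrightarrow> I \<subseteq> carrier M \<and>
     (\<forall>x\<in>I. \<forall>s\<in>carrier M. x \<otimes>\<^bsub>M\<^esub> s \<in> I)"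

definition fg_right_ideal :: "'a monoid \<Rightarrow> 'a set \<Rightarrow> bool" where
  "fg_right_ideal M I \<longleftrightarrow> right_ideal M I \<and>
     (\<exists>X. finite X \<and> X \<subseteq> carrier M \<and>
          I = {x \<otimes>\<^bsub>M\<^esub> s | x s. x \<in> X \<and> s \<in> carrier M})"

definition free_act :: "'a monoid \<Rightarrow> nat \<Rightarrow> (nat \<times> 'a) set" where
  "free_act M n = {0..<n} \<times> carrier M"

definition free_action :: "'a monoid \<Rightarrow> nat \<times> 'a \<Rightarrow> 'a \<Rightarrow> nat \<times> 'a" where
  "free_action M x t = (fst x, snd x \<otimes>\<^bsub>M\<^esub> t)"

definition right_congruence_on ::
  "'a monoid \<Rightarrow> 'b set \<Rightarrow> ('b \<Rightarrow> 'a \<Rightarrow> 'b) \<Rightarrow> ('b \<times> 'b) set \<Rightarrow> bool" where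
  "right_congruence_on M A act \<rho> \<longleftrightarrow> equiv A \<rho> \<and>
     (\<forall>x y t. (x, y) \<in> \<rho> \<longrightarrow> t \<in> carrier M \<longrightarrow> (act x t, act y t) \<in> \<rho>)"

definition gen_right_congruence ::
  "'a monoid \<Rightarrow> 'b set \<Rightarrow> ('b \<Rightarrow> 'a \<Rightarrow> 'b) \<Rightarrow> ('b \<times> 'b) set \<Rightarrow> ('b \<times> 'b) set" where
  "gen_right_congruence M A act H =
     \<Inter>{\<rho>. right_congruence_on M A act \<rho> \<and> H \<subseteq> \<rho>}"

text \<open>A right M-act (A, act) is finitely presented if it is isomorphic to F_n / rho
  with F_n free of finite rank n and rho a finitely generated right congruence;
  equivalently there is a surjective act morphism F_n -> A whose kernel is a
  finitely generated right congruence.\<close>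
definition finitely_presented_act ::
  "'a monoid \<Rightarrow> 'b set \<Rightarrow> ('b \<Rightarrow> 'a \<Rightarrow> 'b) \<Rightarrow> bool" where
  "finitely_presented_act M A act \<longleftrightarrow>
     (\<exists>n H f. finite H \<and> H \<subseteq> free_act M n \<times> free_act M n \<and>
        f ` free_act M n = A \<and>
        (\<forall>x\<in>free_act M n. \<forall>t\<in>carrier M. f (free_action M x t) = act (f x) t) \<and>
        {(x, y). x \<in> free_act M n \<and> y \<in> free_act M n \<and> f x = f y}
          = gen_right_congruence M (free_act M n) (free_action M) H)"

definition weakly_right_coherent :: "'a monoid \<Rightarrow> bool" where
  "weakly_right_coherent M \<longleftrightarrow> monoid M \<and>
     (\<forall>I. fg_right_ideal M I \<longrightarrow>
          finitely_presented_act M I (\<lambda>x s. x \<otimes>\<^bsub>M\<^esub> s))"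

definition retract_of :: "'a monoid \<Rightarrow> 'a monoid \<Rightarrow> bool" where
  "retract_of T S \<longleftrightarrow> carrier T \<subseteq> carrier S \<and>
     (\<forall>x\<in>carrier T. \<forall>y\<in>carrier T. x \<otimes>\<^bsub>T\<^esub> y = x \<otimes>\<^bsub>S\<^esub> y) \<and>
     (\<exists>\<phi>. (\<forall>x\<in>carrier S. \<phi> x \<in> carrier T) \<and>
          (\<forall>x\<in>carrier S. \<forall>y\<in>carrier S. \<phi> (x \<otimes>\<^bsub>S\<^esub> y) = \<phi> x \<otimes>\<^bsub>T\<^esub> \<phi> y) \<and>
          (\<forall>t\<in>carrier T. \<phi> t = t))"

end

theory Submission
  imports Defs
begin

lemma gen_map:
  assumes rc: "right_congruence_on N B actB \<rho>"
    and hB: "\<And>x. x \<in> A \<Longrightarrow> h x \<in> B"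
    and hact: "\<And>x s. x \<in> A \<Longrightarrow> s \<in> carrier M \<Longrightarrow>
        actA x s \<in> A \<and> h (actA x s) = actB (h x) (\<psi> s) \<and> \<psi> s \<in> carrier N"
    and HA: "H \<subseteq> A \<times> A"
    and Hrho: "\<And>p q. (p,q) \<in> H \<Longrightarrow> (h p, h q) \<in> \<rho>"
    and pq: "(p,q) \<in> gen_right_congruence M A actA H"
  shows "(h p, h q) \<in> \<rho>"
proof -
  define \<sigma> where "\<sigma> = {(x,y). x \<in> A \<and> y \<in> A \<and> (h x, h y) \<in> \<rho>}"
  from rc have eq: "equiv B \<rho>"
    and cp: "\<And>x y t. (x,y)\<in>\<rho> \<Longrightarrow> t \<in> carrier N \<Longrightarrow> (actB x t, actB y t) \<in> \<rho>"
    unfolding right_congruence_on_def by auto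
  have "equiv A \<sigma>"
    using eq hB unfolding equiv_def refl_on_def sym_def trans_def \<sigma>_def by blast
  moreover have "\<forall>x y t. (x,y)\<in>\<sigma> \<longrightarrow> t \<in> carrier M \<longrightarrow> (actA x t, actA y t) \<in> \<sigma>"
    unfolding \<sigma>_def using hact cp by auto
  ultimately have "right_congruence_on M A actA \<sigma>" unfolding right_congruence_on_def by blast
  moreover have "H \<subseteq> \<sigma>" using HA Hrho unfolding \<sigma>_def by auto
  ultimately have "(p,q) \<in> \<sigma>" using pq unfolding gen_right_congruence_def by blast
  thus ?thesis unfolding \<sigma>_def by simp
qed

lemma H_sub_gen: "H \<subseteq> gen_right_congruence M A act H"
  unfolding gen_right_congruence_def by blast

theorem mainTheorem4:
  fixes S T :: "'a monoid"
  assumes "monoid S" and "weakly_right_coherent S"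
    and "monoid T" and "retract_of T S"
  shows "weakly_right_coherent T"
proof -
  interpret S: monoid S by fact
  interpret T: monoid T by fact
  from assms(4) obtain \<phi> where TS: "carrier T \<subseteq> carrier S"
    and mT: "\<And>x y. x\<in>carrier T \<Longrightarrow> y\<in>carrier T \<Longrightarrow> x \<otimes>\<^bsub>T\<^esub> y = x \<otimes>\<^bsub>S\<^esub> y"
    and \<phi>T: "\<And>x. x\<in>carrier S \<Longrightarrow> \<phi> x \<in> carrier T"
    and \<phi>m: "\<And>x y. x\<in>carrier S \<Longrightarrow> y\<in>carrier S \<Longrightarrow> \<phi> (x \<otimes>\<^bsub>S\<^esub> y) = \<phi> x \<otimes>\<^bsub>T\<^esub> \<phi> y"
    and \<phi>id: "\<And>t. t\<in>carrier T \<Longrightarrow> \<phi> t = t"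
    unfolding retract_of_def by blast
  have "finitely_presented_act T I (\<lambda>x s. x \<otimes>\<^bsub>T\<^esub> s)" if fgI: "fg_right_ideal T I" for I
  proof -
    from fgI obtain X where X: "finite X" "X \<subseteq> carrier T"
      and Idef: "I = {x \<otimes>\<^bsub>T\<^esub> s | x s. x \<in> X \<and> s \<in> carrier T}"
      unfolding fg_right_ideal_def by blast
    define J where "J = {x \<otimes>\<^bsub>S\<^esub> s | x s. x \<in> X \<and> s \<in> carrier S}"
    have XS: "X \<subseteq> carrier S" using X TS by auto
    have "fg_right_ideal S J"
      unfolding fg_right_ideal_def right_ideal_def J_def
    proof (intro conjI ballI)
      show "{x \<otimes>\<^bsub>S\<^esub> s |x s. x \<in> X \<and> s \<in> carrier S} \<subseteq> carrier S" using XS by auto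
      fix y r assume "y \<in> {x \<otimes>\<^bsub>S\<^esub> s |x s. x \<in> X \<and> s \<in> carrier S}" "r \<in> carrier S"
      then obtain x s where xs: "x \<in> X" "s \<in> carrier S" "y = x \<otimes>\<^bsub>S\<^esub> s" by blast
      have "x \<in> carrier S" using xs XS by auto
      hence "y \<otimes>\<^bsub>S\<^esub> r = x \<otimes>\<^bsub>S\<^esub> (s \<otimes>\<^bsub>S\<^esub> r)" using xs \<open>r \<in> carrier S\<close> by (simp add: S.m_assoc)
      thus "y \<otimes>\<^bsub>S\<^esub> r \<in> {x \<otimes>\<^bsub>S\<^esub> s |x s. x \<in> X \<and> s \<in> carrier S}"
        using xs \<open>r \<in> carrier S\<close> by blast
    next
      show "\<exists>Xa. finite Xa \<and> Xa \<subseteq> carrier S \<and> {x \<otimes>\<^bsub>S\<^esub> s |x s. x \<in> X \<and> s \<in> carrier S} = {x \<otimes>\<^bsub>S\<^esub> s |x s. x \<in> Xa \<and> s \<in> carrier S}"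
        using X(1) XS by blast
    qed
    with assms(2) have "finitely_presented_act S J (\<lambda>x s. x \<otimes>\<^bsub>S\<^esub> s)"
      unfolding weakly_right_coherent_def by blast
    then obtain n H f where Hfin: "finite H" and HA: "H \<subseteq> free_act S n \<times> free_act S n"
      and fsurj: "f ` free_act S n = J"
      and fact: "\<And>x t. x\<in>free_act S n \<Longrightarrow> t\<in>carrier S \<Longrightarrow> f (free_action S x t) = f x \<otimes>\<^bsub>S\<^esub> t"
      and fker: "{(x, y). x \<in> free_act S n \<and> y \<in> free_act S n \<and> f x = f y}
          = gen_right_congruence S (free_act S n) (free_action S) H"
      unfolding finitely_presented_act_def by blast
    define a where "a i = f (i, \<one>\<^bsub>S\<^esub>)" for i
    have fis: "f (i, s) = a i \<otimes>\<^bsub>S\<^esub> s" if "i < n" "s \<in> carrier S" for i s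
      using fact[of "(i, \<one>\<^bsub>S\<^esub>)" s] that
      by (simp add: a_def free_action_def free_act_def)
    have aJ: "a i \<in> J" if "i < n" for i
      using fsurj that unfolding a_def free_act_def by auto
    have JS: "J \<subseteq> carrier S" unfolding J_def using XS by auto
    define c where "c i = \<phi> (a i)" for i
    have cI: "c i \<in> I" if "i < n" for i
    proof -
      from aJ[OF that] obtain x s where "x \<in> X" "s \<in> carrier S" "a i = x \<otimes>\<^bsub>S\<^esub> s"
        unfolding J_def by blast
      have xS: "x \<in> carrier S" "x \<in> carrier T" using XS X \<open>x \<in> X\<close> by auto
      have "c i = \<phi> x \<otimes>\<^bsub>T\<^esub> \<phi> s" unfolding c_def \<open>a i = x \<otimes>\<^bsub>S\<^esub> s\<close>
        by (rule \<phi>m[OF xS(1) \<open>s \<in> carrier S\<close>])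
      hence "c i = x \<otimes>\<^bsub>T\<^esub> \<phi> s" using \<phi>id[OF xS(2)] by simp
      thus ?thesis unfolding Idef using \<open>x \<in> X\<close> \<open>s \<in> carrier S\<close> \<phi>T by blast
    qed
    have IT: "I \<subseteq> carrier T" unfolding Idef using X by auto
    have cT: "c i \<in> carrier T" if "i < n" for i using cI[OF that] IT by auto
    have cJ: "c i \<in> J" if "i < n" for i
    proof -
      from cI[OF that] obtain x s where "x \<in> X" "s \<in> carrier T" "c i = x \<otimes>\<^bsub>T\<^esub> s"
        unfolding Idef by blast
      moreover have "x \<in> carrier T" using \<open>x \<in> X\<close> X by auto
      ultimately have "c i = x \<otimes>\<^bsub>S\<^esub> s" "s \<in> carrier S" using mT TS by auto
      thus ?thesis unfolding J_def using \<open>x \<in> X\<close> by blast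
    qed
    define ks where "ks i = (SOME p. p \<in> free_act S n \<and> f p = c i)" for i
    have ks: "ks i \<in> free_act S n \<and> f (ks i) = c i" if "i < n" for i
    proof -
      have "\<exists>p. p \<in> free_act S n \<and> f p = c i" using cJ[OF that] fsurj by (metis imageE)
      thus ?thesis unfolding ks_def by (rule someI_ex)
    qed
    define k where "k i = fst (ks i)" for i
    define sv where "sv i = snd (ks i)" for i
    define d where "d i = \<phi> (sv i)" for i
    have kn: "k i < n" and svS: "sv i \<in> carrier S" and fks: "a (k i) \<otimes>\<^bsub>S\<^esub> sv i = c i"
      if "i < n" for i
      using ks[OF that] fis[of "k i" "sv i"] unfolding k_def sv_def free_act_def
      by (auto simp: mem_Times_iff)
    have dT: "d i \<in> carrier T" if "i < n" for i using svS[OF that] \<phi>T d_def by auto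
    define \<Phi> where "\<Phi> p = (fst p, \<phi> (snd p))" for p :: "nat \<times> 'a"
    define HT where "HT = (\<lambda>(p,q). (\<Phi> p, \<Phi> q)) ` H
        \<union> (\<lambda>i. ((i, \<one>\<^bsub>T\<^esub>), (k i, d i))) ` {0..<n}"
    define g where "g p = c (fst p) \<otimes>\<^bsub>T\<^esub> snd p" for p
    have aS: "a i \<in> carrier S" if "i < n" for i using aJ[OF that] JS by auto
    have g\<Phi>: "g (\<Phi> p) = \<phi> (f p)" if "p \<in> free_act S n" for p
      using that fis[of "fst p" "snd p"] \<phi>m aS unfolding g_def \<Phi>_def c_def free_act_def
      by (auto simp: mem_Times_iff)
    let ?A = "free_act T n"
    have HTfin: "finite HT" unfolding HT_def using Hfin by auto
    have HTA: "HT \<subseteq> ?A \<times> ?A"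
      unfolding HT_def using HA kn dT \<phi>T unfolding free_act_def \<Phi>_def
      by (auto simp: mem_Times_iff)
    have gsurj: "g ` ?A = I"
    proof
      show "g ` ?A \<subseteq> I"
      proof
        fix y assume "y \<in> g ` ?A"
        then obtain i t where it: "i < n" "t \<in> carrier T" "y = c i \<otimes>\<^bsub>T\<^esub> t"
          unfolding g_def free_act_def by auto
        from cI[OF it(1)] obtain x s where "x \<in> X" "s \<in> carrier T" "c i = x \<otimes>\<^bsub>T\<^esub> s"
          unfolding Idef by blast
        moreover have "x \<in> carrier T" using \<open>x \<in> X\<close> X by auto
        ultimately have "y = x \<otimes>\<^bsub>T\<^esub> (s \<otimes>\<^bsub>T\<^esub> t)" using it by (simp add: T.m_assoc)
        thus "y \<in> I" unfolding Idef using it \<open>x \<in> X\<close> \<open>s \<in> carrier T\<close> by blast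
      qed
    next
      show "I \<subseteq> g ` ?A"
      proof
        fix y assume "y \<in> I"
        then obtain x t where xt: "x \<in> X" "t \<in> carrier T" "y = x \<otimes>\<^bsub>T\<^esub> t"
          unfolding Idef by blast
        have yS: "y = x \<otimes>\<^bsub>S\<^esub> t" using xt mT X by auto
        hence "y \<in> J" unfolding J_def using xt TS by blast
        then obtain p where p: "p \<in> free_act S n" "f p = y" using fsurj by auto
        have "y \<in> carrier T" using \<open>y \<in> I\<close> IT by auto
        hence "g (\<Phi> p) = y" using g\<Phi>[OF p(1)] p(2) \<phi>id by simp
        moreover have "\<Phi> p \<in> ?A" using p(1) \<phi>T unfolding \<Phi>_def free_act_def
          by (auto simp: mem_Times_iff)
        ultimately show "y \<in> g ` ?A" by blast
      qed
    qed
    have gact: "g (free_action T x t) = g x \<otimes>\<^bsub>T\<^esub> t" if "x \<in> ?A" "t \<in> carrier T" for x t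
      using that cT unfolding g_def free_action_def free_act_def
      by (auto simp: mem_Times_iff T.m_assoc)
    define K where "K = {(x, y). x \<in> ?A \<and> y \<in> ?A \<and> g x = g y}"
    have Krc: "right_congruence_on T ?A (free_action T) K"
    proof -
      have "equiv ?A K" unfolding K_def equiv_def refl_on_def sym_def trans_def by auto
      moreover have "free_action T x t \<in> ?A" if "x \<in> ?A" "t \<in> carrier T" for x t
        using that unfolding free_action_def free_act_def by (auto simp: mem_Times_iff)
      ultimately show ?thesis unfolding right_congruence_on_def K_def using gact by auto
    qed
    have HTK: "HT \<subseteq> K"
    proof
      fix pq assume "pq \<in> HT"
      then consider (a) p q where "(p,q) \<in> H" "pq = (\<Phi> p, \<Phi> q)"
        | (b) i where "i < n" "pq = ((i, \<one>\<^bsub>T\<^esub>), (k i, d i))"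
        unfolding HT_def by auto
      thus "pq \<in> K"
      proof cases
        case a
        have "(p,q) \<in> gen_right_congruence S (free_act S n) (free_action S) H"
          using a H_sub_gen by blast
        hence "f p = f q" "p \<in> free_act S n" "q \<in> free_act S n" using fker by auto
        thus ?thesis using a g\<Phi> HTA \<open>pq \<in> HT\<close> unfolding K_def by auto
      next
        case b
        have "g (k i, d i) = c i"
          using g\<Phi>[of "ks i"] ks[OF b(1)] \<phi>id cT[OF b(1)]
          unfolding g_def \<Phi>_def k_def d_def sv_def by auto
        moreover have "g (i, \<one>\<^bsub>T\<^esub>) = c i" using cT[OF b(1)] unfolding g_def by simp
        ultimately show ?thesis using b HTA \<open>pq \<in> HT\<close> unfolding K_def by auto
      qed
    qed
    have "K = gen_right_congruence T ?A (free_action T) HT"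
    proof
      show "gen_right_congruence T ?A (free_action T) HT \<subseteq> K"
        using Krc HTK unfolding gen_right_congruence_def by blast
    next
      show "K \<subseteq> gen_right_congruence T ?A (free_action T) HT"
      proof
        fix pq assume "pq \<in> K"
        then obtain i t j u where pq: "pq = ((i,t),(j,u))" "i < n" "j < n"
          "t \<in> carrier T" "u \<in> carrier T" "c i \<otimes>\<^bsub>T\<^esub> t = c j \<otimes>\<^bsub>T\<^esub> u"
          unfolding K_def g_def free_act_def by auto
        show "pq \<in> gen_right_congruence T ?A (free_action T) HT"
          unfolding gen_right_congruence_def
        proof (intro InterI, clarsimp)
          fix \<rho> assume rc: "right_congruence_on T ?A (free_action T) \<rho>" and HT\<rho>: "HT \<subseteq> \<rho>"
          from rc have eq: "equiv ?A \<rho>"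
            and cp: "\<And>x y t. (x,y)\<in>\<rho> \<Longrightarrow> t \<in> carrier T \<Longrightarrow>
                (free_action T x t, free_action T y t) \<in> \<rho>"
            unfolding right_congruence_on_def by auto
          have gen1: "((l, v), (k l, d l \<otimes>\<^bsub>T\<^esub> v)) \<in> \<rho>" if "l < n" "v \<in> carrier T" for l v
          proof -
            have "((l, \<one>\<^bsub>T\<^esub>), (k l, d l)) \<in> \<rho>" using HT\<rho> that unfolding HT_def by auto
            from cp[OF this that(2)] show ?thesis using that by (simp add: free_action_def)
          qed
          have mid: "((k l, d l \<otimes>\<^bsub>T\<^esub> v), (k m, d m \<otimes>\<^bsub>T\<^esub> w)) \<in> \<rho>"
            if "l < n" "v \<in> carrier T" "m < n" "w \<in> carrier T"
               "c l \<otimes>\<^bsub>T\<^esub> v = c m \<otimes>\<^bsub>T\<^esub> w" for l v m w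
          proof -
            define p' where "p' = (k l, sv l \<otimes>\<^bsub>S\<^esub> v)"
            define q' where "q' = (k m, sv m \<otimes>\<^bsub>S\<^esub> w)"
            have vS: "v \<in> carrier S" "w \<in> carrier S" using that TS by auto
            have p'A: "p' \<in> free_act S n" "q' \<in> free_act S n"
              unfolding p'_def q'_def free_act_def using kn svS that vS by auto
            have "f p' = c l \<otimes>\<^bsub>S\<^esub> v"
              unfolding p'_def using fis[of "k l"] kn svS that vS fks aS
              by (simp add: S.m_assoc[symmetric])
            moreover have "f q' = c m \<otimes>\<^bsub>S\<^esub> w"
              unfolding q'_def using fis[of "k m"] kn svS that vS fks aS
              by (simp add: S.m_assoc[symmetric])
            ultimately have "f p' = f q'" using that mT cT by metis
            hence "(p', q') \<in> gen_right_congruence S (free_act S n) (free_action S) H"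
              using fker p'A by blast
            note pqgen = this
            have h1: "\<And>p q. (p, q) \<in> H \<Longrightarrow> (\<Phi> p, \<Phi> q) \<in> \<rho>" using HT\<rho> unfolding HT_def by auto
            have h2: "\<And>x. x \<in> free_act S n \<Longrightarrow> \<Phi> x \<in> ?A"
                using \<phi>T unfolding \<Phi>_def free_act_def by (auto simp: mem_Times_iff)
            have h3: "\<And>x s. x \<in> free_act S n \<Longrightarrow> s \<in> carrier S \<Longrightarrow>
                  free_action S x s \<in> free_act S n \<and>
                  \<Phi> (free_action S x s) = free_action T (\<Phi> x) (\<phi> s) \<and> \<phi> s \<in> carrier T"
                using \<phi>T \<phi>m unfolding \<Phi>_def free_act_def free_action_def
                by (auto simp: mem_Times_iff)
            have "(\<Phi> p', \<Phi> q') \<in> \<rho>"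
              by (rule gen_map[OF rc h2 h3 HA h1 pqgen])
            moreover have "\<Phi> p' = (k l, d l \<otimes>\<^bsub>T\<^esub> v)" "\<Phi> q' = (k m, d m \<otimes>\<^bsub>T\<^esub> w)"
              unfolding \<Phi>_def p'_def q'_def d_def using \<phi>m svS that vS \<phi>id by auto
            ultimately show ?thesis by simp
          qed
          have s: "sym \<rho>" and tr: "trans \<rho>" using eq unfolding equiv_def by auto
          have 1: "((i,t),(k i, d i \<otimes>\<^bsub>T\<^esub> t)) \<in> \<rho>" using gen1 pq by auto
          have 2: "((k i, d i \<otimes>\<^bsub>T\<^esub> t), (k j, d j \<otimes>\<^bsub>T\<^esub> u)) \<in> \<rho>" using mid pq by auto
          have 3: "((k j, d j \<otimes>\<^bsub>T\<^esub> u), (j,u)) \<in> \<rho>" using gen1 pq s by (meson symD)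
          show "pq \<in> \<rho>" unfolding pq(1) using 1 2 3 tr by (meson transD)
        qed
      qed
    qed
    thus ?thesis unfolding finitely_presented_act_def
      using HTfin HTA gsurj gact K_def by blast
  qed
  thus ?thesis unfolding weakly_right_coherent_def using assms(3) by blast
qed

end
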